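(* Let $\mathcal{H}$ be a Hilbert space, $H$ self-adjoint on $\mathcal{H}$, and $u:\mathbb{R}^+\to\mathcal{H}$ with $\sup_{t\ge0}\|u(t)\|<\infty$ and $u\in C^1(\mathbb{R}^+,\mathcal{H})\cap C^0(\mathbb{R}^+,{\rm Dom}\,H)$; set $r(t)=\partial_tu(t)+iHu(t)$. Let $t\mapsto M(t)\in B(\mathcal{H})$ have a bounded Heisenberg derivative $\mathcal{D}M(t)$ and suppose: (i) $\|M(\cdot)r(\cdot)\|\in L^1(\mathbb{R}^+,dt)$; (ii) $|(u_1|\mathcal{D}M(t)u(t))|\le\|B_1(t)u_1\|\,\|B(t)u(t)\|$ for all $u_1\in\mathcal{H}$, with $B(t),B_1(t)\in B(\mathcal{H})$; (iii) $\int_{\mathbb{R}^+}\|B(t)u(t)\|^2dt<\infty$ and $\int_{\mathbb{R}^+}\|B_1(t)e^{-itH}u_1\|^2dt\le C\|u_1\|^2$ for all $u_1\in\mathcal{H}$. Then $\lim_{t\to+\infty}e^{itH}M(t)u(t)$ exists.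
   Context: The Heisenberg derivative is $\mathcal{D}M(t)=\partial_tM(t)+[H,iM(t)]$, where $[H,iM(t)]$, defined as a quadratic form on ${\rm Dom}\,H$, is assumed to extend to a bounded operator. *)

theory Defs
  imports "HOL-Analysis.Analysis"
begin

class complex_vector = real_vector +
  fixes scaleC :: "complex \<Rightarrow> 'a \<Rightarrow> 'a"  (infixr \<open>*\<^sub>C\<close> 75)
  assumes scaleR_scaleC: "scaleR r x = scaleC (complex_of_real r) x"
    and scaleC_add_right: "a *\<^sub>C (x + y) = a *\<^sub>C x + a *\<^sub>C y"
    and scaleC_add_left: "(a + b) *\<^sub>C x = a *\<^sub>C x + b *\<^sub>C x"
    and scaleC_scaleC: "a *\<^sub>C (b *\<^sub>C x) = (a * b) *\<^sub>C x"
    and scaleC_one: "1 *\<^sub>C x = x"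

class complex_normed_vector = complex_vector + real_normed_vector +
  assumes norm_scaleC: "norm (a *\<^sub>C x) = cmod a * norm x"

text \<open>Inner product, conjugate-linear in the first and linear in the second argument
  (physics convention, written (x|y) in the paper).\<close>
class complex_inner = complex_normed_vector +
  fixes cinner :: "'a \<Rightarrow> 'a \<Rightarrow> complex"
  assumes cinner_cnj_commute: "cinner x y = cnj (cinner y x)"
    and cinner_add_left: "cinner (x + y) z = cinner x z + cinner y z"
    and cinner_scaleC_left: "cinner (a *\<^sub>C x) y = cnj a * cinner x y"
    and cinner_nonneg: "0 \<le> Re (cinner x x)"
    and cinner_eq_zero_iff: "cinner x x = 0 \<longleftrightarrow> x = 0"
    and norm_eq_sqrt_cinner: "norm x = sqrt (Re (cinner x x))"

text \<open>A complex Hilbert space is a type of class \<open>{complex_inner, complete_space}\<close>.\<close>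

definition cbounded_linear :: "('a::complex_normed_vector \<Rightarrow> 'b::complex_normed_vector) \<Rightarrow> bool" where
  "cbounded_linear f \<longleftrightarrow>
     (\<forall>x y. f (x + y) = f x + f y) \<and> (\<forall>c x. f (c *\<^sub>C x) = c *\<^sub>C f x) \<and>
     (\<exists>K. \<forall>x. norm (f x) \<le> norm x * K)"

definition csubspace :: "'a::complex_vector set \<Rightarrow> bool" where
  "csubspace D \<longleftrightarrow> 0 \<in> D \<and> (\<forall>x\<in>D. \<forall>y\<in>D. x + y \<in> D) \<and> (\<forall>c. \<forall>x\<in>D. c *\<^sub>C x \<in> D)"

definition adjoint_domain :: "'a::complex_inner set \<Rightarrow> ('a \<Rightarrow> 'a) \<Rightarrow> 'a set" where
  "adjoint_domain D H = {y. \<exists>z. \<forall>x\<in>D. cinner (H x) y = cinner x z}"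

text \<open>(Possibly unbounded) self-adjoint operator \<open>H\<close> with domain \<open>D\<close>:
  densely defined, linear, symmetric, and \<open>Dom H\<^sup>* \<subseteq> Dom H\<close> (hence \<open>H = H\<^sup>*\<close>).
  Values of \<open>H\<close> outside \<open>D\<close> are irrelevant.\<close>
definition self_adjoint :: "'a::complex_inner set \<Rightarrow> ('a \<Rightarrow> 'a) \<Rightarrow> bool" where
  "self_adjoint D H \<longleftrightarrow>
     csubspace D \<and> closure D = UNIV \<and>
     (\<forall>x\<in>D. \<forall>y\<in>D. H (x + y) = H x + H y) \<and> (\<forall>c. \<forall>x\<in>D. H (c *\<^sub>C x) = c *\<^sub>C H x) \<and>
     (\<forall>x\<in>D. \<forall>y\<in>D. cinner (H x) y = cinner x (H y)) \<and>
     adjoint_domain D H \<subseteq> D"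

text \<open>\<open>U t = e\<^sup>-\<^sup>i\<^sup>t\<^sup>H\<close>: the strongly continuous unitary group whose generator is \<open>-iH\<close>
  (exists and is unique by Stone's theorem when \<open>H\<close> is self-adjoint).\<close>
definition unitary_group_of :: "'a::complex_inner set \<Rightarrow> ('a \<Rightarrow> 'a) \<Rightarrow> (real \<Rightarrow> 'a \<Rightarrow> 'a) \<Rightarrow> bool" where
  "unitary_group_of D H U \<longleftrightarrow>
     (\<forall>t. cbounded_linear (U t) \<and> surj (U t) \<and> (\<forall>x y. cinner (U t x) (U t y) = cinner x y)) \<and>
     U 0 = id \<and> (\<forall>s t. U (s + t) = U s \<circ> U t) \<and>
     (\<forall>x. continuous_on UNIV (\<lambda>t. U t x)) \<and>
     (\<forall>x. x \<in> D \<longleftrightarrow> (\<exists>y. ((\<lambda>t. U t x) has_vector_derivative y) (at 0))) \<and>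
     (\<forall>x\<in>D. ((\<lambda>t. U t x) has_vector_derivative (- \<i>) *\<^sub>C H x) (at 0))"

end

theory Submission
  imports Defs
begin


lemma cinner_add_right: "cinner x (y + z) = cinner x y + cinner x z"
  by (metis cinner_add_left cinner_cnj_commute complex_cnj_add)

lemma cinner_scaleC_right: "cinner x (a *\<^sub>C y) = a * cinner x y"
  by (metis cinner_cnj_commute cinner_scaleC_left complex_cnj_cnj complex_cnj_mult)

lemma cinner_zero_left [simp]: "cinner 0 y = 0"
  using cinner_add_left[of 0 0 y] by simp

lemma cinner_zero_right [simp]: "cinner x 0 = 0"
  using cinner_add_right[of x 0 0] by simp

lemma cinner_minus_left: "cinner (- x) y = - cinner x y"
proof -
  have "cinner x y + cinner (- x) y = cinner (x + - x) y" by (rule cinner_add_left[symmetric])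
  also have "\<dots> = 0" by simp
  finally have "cinner x y + cinner (- x) y = 0" .
  from minus_unique[OF this] show ?thesis by (rule sym)
qed

lemma cinner_minus_right: "cinner x (- y) = - cinner x y"
proof -
  have "cinner x y + cinner x (- y) = cinner x (y + - y)" by (rule cinner_add_right[symmetric])
  also have "\<dots> = 0" by simp
  finally have "cinner x y + cinner x (- y) = 0" .
  from minus_unique[OF this] show ?thesis by (rule sym)
qed

lemma cinner_diff_left: "cinner (x - y) z = cinner x z - cinner y z"
  by (simp only: diff_conv_add_uminus cinner_add_left cinner_minus_left)

lemma cinner_diff_right: "cinner x (y - z) = cinner x y - cinner x z"
  by (simp only: diff_conv_add_uminus cinner_add_right cinner_minus_right)

lemma cinner_scaleR_left: "cinner (r *\<^sub>R x) y = r *\<^sub>R cinner x y"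
  by (simp add: scaleR_scaleC cinner_scaleC_left scaleR_conv_of_real)

lemma cinner_scaleR_right: "cinner x (r *\<^sub>R y) = r *\<^sub>R cinner x y"
  by (simp add: scaleR_scaleC cinner_scaleC_right scaleR_conv_of_real)

lemma cinner_self: "cinner x x = complex_of_real ((norm x)\<^sup>2)"
proof -
  have "Im (cinner x x) = 0"
    using arg_cong[OF cinner_cnj_commute[of x x], of Im] by simp
  moreover have "Re (cinner x x) = (norm x)\<^sup>2"
    using norm_eq_sqrt_cinner[of x] cinner_nonneg[of x] by simp
  ultimately show ?thesis by (simp add: complex_eq_iff)
qed

lemma cinner_cauchy_schwarz: "cmod (cinner x y) \<le> norm x * norm y"
proof (cases "x = 0")
  case True then show ?thesis by simp
next
  case False
  then have nx: "norm x > 0" by simp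
  define c where "c = cinner x y / cinner x x"
  define z where "z = y - c *\<^sub>C x"
  have cxx: "cinner x x \<noteq> 0" using False cinner_eq_zero_iff by blast
  have xz: "cinner x z = 0"
    unfolding z_def c_def using cxx by (simp add: cinner_diff_right cinner_scaleC_right)
  have zx: "cinner z x = 0"
    using xz cinner_cnj_commute[of z x] by simp
  have yz: "y = z + c *\<^sub>C x" unfolding z_def by simp
  have "cinner y y = cinner z z + cnj c * c * cinner x x"
    unfolding yz by (simp add: cinner_add_left cinner_add_right cinner_scaleC_left cinner_scaleC_right xz zx)
  moreover have "cnj c * c = complex_of_real ((cmod c)\<^sup>2)"
    by (simp add: complex_norm_square[symmetric] mult.commute)
  ultimately have "complex_of_real ((norm y)\<^sup>2) = complex_of_real ((norm z)\<^sup>2 + (cmod c)\<^sup>2 * (norm x)\<^sup>2)"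
    by (simp add: cinner_self)
  then have "(norm y)\<^sup>2 = (norm z)\<^sup>2 + (cmod c)\<^sup>2 * (norm x)\<^sup>2"
    using of_real_eq_iff by blast
  then have "(cmod c)\<^sup>2 * (norm x)\<^sup>2 \<le> (norm y)\<^sup>2" by simp
  moreover have "cmod c = cmod (cinner x y) / (norm x)\<^sup>2"
    unfolding c_def by (simp add: cinner_self norm_divide norm_power)
  ultimately have "(cmod (cinner x y))\<^sup>2 / (norm x)\<^sup>2 \<le> (norm y)\<^sup>2"
    using nx by (simp add: power_divide field_simps power2_eq_square)
  then have "(cmod (cinner x y))\<^sup>2 \<le> (norm x * norm y)\<^sup>2"
    using nx by (simp add: field_simps power_mult_distrib)
  then show ?thesis
    by (meson norm_ge_zero power2_le_imp_le zero_le_mult_iff)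
qed

lemma cbounded_linear_bounded_linear:
  assumes "cbounded_linear f" shows "bounded_linear f"
proof -
  from assms obtain K where add: "\<And>x y. f (x + y) = f x + f y"
    and sc: "\<And>c x. f (c *\<^sub>C x) = c *\<^sub>C f x" and K: "\<And>x. norm (f x) \<le> norm x * K"
    unfolding cbounded_linear_def by blast
  show ?thesis
    by (rule bounded_linear_intro[where K=K]) (auto simp: add K scaleR_scaleC sc)
qed

lemma bounded_bilinear_cinner:
  "bounded_bilinear (cinner :: 'a::complex_inner \<Rightarrow> 'a \<Rightarrow> complex)"
proof
  show "\<exists>K. \<forall>a b. norm (cinner a b) \<le> norm (a::'a) * norm b * K"
    by (rule exI[of _ 1]) (simp add: cinner_cauchy_schwarz)
qed (simp_all add: cinner_add_left cinner_add_right cinner_scaleR_left cinner_scaleR_right)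



lemma uniform_boundedness:
  fixes T :: "'i \<Rightarrow> 'a::{real_normed_vector,complete_space} \<Rightarrow> 'b::real_normed_vector"
  assumes lin: "\<And>i. i \<in> I \<Longrightarrow> bounded_linear (T i)"
    and pw: "\<And>x. \<exists>c. \<forall>i\<in>I. norm (T i x) \<le> c"
  shows "\<exists>K. \<forall>i\<in>I. \<forall>x. norm (T i x) \<le> K * norm x"
proof -
  define E where "E n = {x. \<forall>i\<in>I. norm (T i x) \<le> real n}" for n :: nat
  have closedE: "closed (E n)" for n
  proof -
    have "E n = (\<Inter>i\<in>I. {x. norm (T i x) \<le> real n})" unfolding E_def by auto
    moreover have "closed {x. norm (T i x) \<le> real n}" if "i \<in> I" for i
      using lin[OF that]
      by (intro closed_Collect_le continuous_intros) (auto intro: linear_continuous_on)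
    ultimately show ?thesis by (auto intro: closed_INT)
  qed
  have cover: "\<Union>(range E) = UNIV"
  proof -
    have "x \<in> \<Union>(range E)" for x
    proof -
    obtain c where c: "\<forall>i\<in>I. norm (T i x) \<le> c" using pw by blast
    have "x \<in> E (nat \<lceil>c\<rceil>)" unfolding E_def using c
      by (auto intro: order_trans[OF _ real_nat_ceiling_ge])
    then show "x \<in> \<Union>(range E)" by blast
    qed
    then show ?thesis by blast
  qed
  have "\<exists>n. interior (E n) \<noteq> {}"
  proof (rule ccontr)
    assume "\<not> ?thesis"
    then have "euclidean interior_of \<Union>(range E) = {}"
      by (intro Baire_category_alt) (auto simp: completely_metrizable_space_euclidean closedE closed_closedin[symmetric])
    then show False using cover by simp
  qed
  then obtain n x0 where "x0 \<in> interior (E n)" by blast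
  then obtain r where r: "r > 0" "ball x0 r \<subseteq> E n" using mem_interior by blast
  have x0E: "x0 \<in> E n" using r by auto
  show ?thesis
  proof (intro exI[of _ "4 * real n / r"] ballI allI)
    fix i x assume i: "i \<in> I"
    interpret L: bounded_linear "T i" by (rule lin[OF i])
    show "norm (T i x) \<le> 4 * real n / r * norm x"
    proof (cases "x = 0")
      case True then show ?thesis by (simp add: L.zero)
    next
      case False
      define a where "a = r / (2 * norm x)"
      have a: "a > 0" using False r by (simp add: a_def)
      have "norm (a *\<^sub>R x) < r" using False r by (simp add: a_def)
      then have "x0 + a *\<^sub>R x \<in> E n" using r by (auto simp: dist_norm intro!: subsetD[OF r(2)])
      then have n1: "norm (T i (x0 + a *\<^sub>R x)) \<le> real n" using i by (auto simp: E_def)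
      have n2: "norm (T i x0) \<le> real n" using x0E i by (auto simp: E_def)
      have "a * norm (T i x) = norm (T i (x0 + a *\<^sub>R x) - T i x0)"
        using a by (simp add: L.add L.scale)
      also have "\<dots> \<le> 2 * real n" using n1 n2 norm_triangle_ineq4[of "T i (x0 + a *\<^sub>R x)" "T i x0"] by linarith
      finally have "a * norm (T i x) \<le> 2 * real n" .
      then show ?thesis using False r unfolding a_def by (simp add: field_simps)
    qed
  qed
qed



lemma deriv_apply:
  fixes M :: "real \<Rightarrow> 'a::real_normed_vector \<Rightarrow> 'b::real_normed_vector"
    and Mt' :: "'a \<Rightarrow> 'b" and v :: "real \<Rightarrow> 'a"
  assumes K: "\<forall>s\<in>S. \<forall>x. norm (M s x) \<le> K * norm x"
    and lin: "\<forall>s\<in>S. bounded_linear (M s)"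
    and Md: "\<And>x. ((\<lambda>s. M s x) has_vector_derivative Mt' x) (at t within S)"
    and vd: "(v has_vector_derivative v') (at t within S)"
  shows "((\<lambda>s. M s (v s)) has_vector_derivative (M t v' + Mt' (v t))) (at t within S)"
proof -
  define D where "D = M t v' + Mt' (v t)"
  define n1 where "n1 y = norm ((1 / norm (y - t)) *\<^sub>R (v y - (v t + (y - t) *\<^sub>R v')))" for y
  define n2 where "n2 y = norm (M y v' - M t v')" for y
  define n3 where "n3 y = norm ((1 / norm (y - t)) *\<^sub>R (M y (v t) - (M t (v t) + (y - t) *\<^sub>R Mt' (v t))))" for y
  have l1: "(n1 \<longlongrightarrow> 0) (at t within S)"
    using vd unfolding n1_def has_vector_derivative_def has_derivative_within
    by (intro tendsto_norm_zero) blast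
  have l3: "(n3 \<longlongrightarrow> 0) (at t within S)"
    using Md[of "v t"] unfolding n3_def has_vector_derivative_def has_derivative_within
    by (intro tendsto_norm_zero) blast
  have "continuous (at t within S) (\<lambda>s. M s v')"
    using Md[of v'] by (rule has_vector_derivative_continuous)
  then have "((\<lambda>y. M y v') \<longlongrightarrow> M t v') (at t within S)"
    by (simp add: continuous_within)
  then have l2: "(n2 \<longlongrightarrow> 0) (at t within S)"
    unfolding n2_def by (intro tendsto_norm_zero) (simp add: LIM_zero)
  have lim: "((\<lambda>y. K * n1 y + n2 y + n3 y) \<longlongrightarrow> 0) (at t within S)"
    using tendsto_add[OF tendsto_add[OF tendsto_mult_right_zero[OF l1, of K] l2] l3] by simp
  have ev: "\<forall>\<^sub>F y in at t within S. norm ((1 / norm (y - t)) *\<^sub>R (M y (v y) - (M t (v t) + (y - t) *\<^sub>R D)))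
      \<le> K * n1 y + n2 y + n3 y"
    unfolding eventually_at_filter
  proof (intro always_eventually allI impI)
    fix y assume y: "y \<noteq> t" "y \<in> S"
    interpret L: bounded_linear "M y" using lin y by blast
    define c where "c = 1 / norm (y - t)"
    have c: "c \<ge> 0" by (simp add: c_def)
    have eq: "M y (v y) - (M t (v t) + (y - t) *\<^sub>R D) =
        M y (v y - (v t + (y - t) *\<^sub>R v')) + (y - t) *\<^sub>R (M y v' - M t v')
        + (M y (v t) - (M t (v t) + (y - t) *\<^sub>R Mt' (v t)))"
      unfolding D_def by (simp add: L.diff L.add L.scale algebra_simps)
    have "norm (c *\<^sub>R M y (v y - (v t + (y - t) *\<^sub>R v'))) \<le> K * n1 y"
    proof -
      have "norm (c *\<^sub>R M y (v y - (v t + (y - t) *\<^sub>R v'))) = norm (M y (c *\<^sub>R (v y - (v t + (y - t) *\<^sub>R v'))))"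
        by (simp add: L.scale)
      also have "\<dots> \<le> K * n1 y" using K y unfolding n1_def c_def by blast
      finally show ?thesis .
    qed
    moreover have "norm (c *\<^sub>R ((y - t) *\<^sub>R (M y v' - M t v'))) = n2 y"
      using y by (simp add: c_def n2_def)
    moreover have "norm (c *\<^sub>R (M y (v t) - (M t (v t) + (y - t) *\<^sub>R Mt' (v t)))) = n3 y"
      by (simp add: c_def n3_def)
    ultimately show "norm ((1 / norm (y - t)) *\<^sub>R (M y (v y) - (M t (v t) + (y - t) *\<^sub>R D))) \<le> K * n1 y + n2 y + n3 y"
      unfolding eq c_def[symmetric] scaleR_add_right
      by (smt (verit) norm_triangle_ineq)
  qed
  have "((\<lambda>y. (1 / norm (y - t)) *\<^sub>R (M y (v y) - (M t (v t) + (y - t) *\<^sub>R D))) \<longlongrightarrow> 0) (at t within S)"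
    by (rule Lim_null_comparison[OF ev lim])
  then show ?thesis
    unfolding D_def[symmetric] has_vector_derivative_def has_derivative_within
    by (simp add: bounded_linear_scaleR_left)
qed



lemma dense_bound:
  fixes x :: "'a::complex_inner"
  assumes dense: "closure D = UNIV"
    and bd: "\<forall>\<phi>\<in>D. norm \<phi> \<le> 2 \<longrightarrow> cmod (cinner \<phi> x) \<le> K"
  shows "norm x \<le> 2 * K"
proof -
  define e where "e = (if x = 0 then 0 else (1 / norm x) *\<^sub>R x)"
  have "e \<in> closure D" using dense by simp
  then have "\<forall>\<epsilon>>0. \<exists>y\<in>D. dist y e < \<epsilon>" by (simp only: closure_approachable)
  then have "(1/2::real) > 0 \<longrightarrow> (\<exists>y\<in>D. dist y e < 1/2)" by (rule spec)
  then have "\<exists>y\<in>D. dist y e < 1/2" by simp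
  then obtain \<phi> where \<phi>: "\<phi> \<in> D" "dist \<phi> e < 1/2" by blast
  have ne: "norm e \<le> 1" by (simp add: e_def)
  have "norm \<phi> \<le> norm e + dist \<phi> e"
    by (metis dist_norm norm_triangle_sub add.commute)
  then have "norm \<phi> \<le> 2" using ne \<phi> by linarith
  then have k: "cmod (cinner \<phi> x) \<le> K" using bd \<phi> by blast
  have ex: "norm x = cmod (cinner e x)"
  proof (cases "x = 0")
    case True then show ?thesis by (simp add: e_def)
  next
    case False
    then have "cinner e x = complex_of_real (norm x)"
      by (simp add: e_def cinner_scaleR_left cinner_self scaleR_conv_of_real power2_eq_square)
    then show ?thesis by simp
  qed
  have "cinner e x = cinner \<phi> x + cinner (e - \<phi>) x" by (simp add: cinner_diff_left)
  then have "cmod (cinner e x) \<le> cmod (cinner \<phi> x) + cmod (cinner (e - \<phi>) x)"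
    by (metis norm_triangle_ineq)
  also have "cmod (cinner (e - \<phi>) x) \<le> norm (e - \<phi>) * norm x" by (rule cinner_cauchy_schwarz)
  also have "norm (e - \<phi>) * norm x \<le> 1/2 * norm x"
    using \<phi>(2) by (intro mult_right_mono) (auto simp: dist_norm norm_minus_commute)
  finally show ?thesis using ex k by linarith
qed

lemma integrable_sub:
  fixes a :: "real \<Rightarrow> real"
  assumes "set_integrable lborel {0..} a" "0 \<le> T1"
  shows "a integrable_on {T1..T2}"
proof -
  have "set_integrable lborel {T1..T2} a"
    by (rule set_integrable_subset[OF assms(1)]) (use assms(2) in auto)
  then show ?thesis by (rule set_borel_integral_eq_integral(1))
qed

lemma integral_sub_le:
  fixes a :: "real \<Rightarrow> real"
  assumes "set_integrable lborel {0..} a" "0 \<le> T1" "\<forall>t\<ge>0. 0 \<le> a t"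
  shows "integral {T1..T2} a \<le> (LINT t:{0..}|lborel. a t)"
proof -
  have "integral {T1..T2} a \<le> integral {0..} a"
    by (rule integral_subset_le) (use assms integrable_sub set_borel_integral_eq_integral(1) in auto)
  also have "\<dots> = (LINT t:{0..}|lborel. a t)"
    using set_borel_integral_eq_integral(2)[OF assms(1)] by simp
  finally show ?thesis .
qed

lemma tail_small:
  fixes a :: "real \<Rightarrow> real"
  assumes int: "set_integrable lborel {0..} a" and d: "\<delta> > 0"
  shows "\<exists>N\<ge>0. \<forall>T1 T2. N \<le> T1 \<longrightarrow> T1 \<le> T2 \<longrightarrow> integral {T1..T2} a < \<delta>"
proof -
  define I where "I b = integral {0..b} a" for b
  have eqI: "I b = (LINT t:{0..b}|lborel. a t)" for b
  proof -
    have "set_integrable lborel {0..b} a"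
      by (rule set_integrable_subset[OF int]) auto
    then show ?thesis unfolding I_def using set_borel_integral_eq_integral(2) by metis
  qed
  have "((\<lambda>b. LINT t:{0..b}|lborel. a t) \<longlongrightarrow> (LINT t:{0..}|lborel. a t)) at_top"
    by (rule tendsto_set_lebesgue_integral_at_top[OF _ int]) auto
  moreover have "I = (\<lambda>b. LINT t:{0..b}|lborel. a t)" using eqI by (intro ext)
  ultimately have lim: "(I \<longlongrightarrow> (LINT t:{0..}|lborel. a t)) at_top" by simp
  then have "\<forall>\<^sub>F b in at_top. dist (I b) (LINT t:{0..}|lborel. a t) < \<delta> / 2"
    using d tendsto_iff[THEN iffD1, OF lim, rule_format, of "\<delta>/2"] by simp
  then obtain N where N: "\<And>b. b \<ge> N \<Longrightarrow> dist (I b) (LINT t:{0..}|lborel. a t) < \<delta> / 2"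
    by (auto simp: eventually_at_top_linorder)
  show ?thesis
  proof (intro exI[of _ "max N 0"] conjI allI impI)
    fix T1 T2 assume T: "max N 0 \<le> T1" "T1 \<le> T2"
    have "a integrable_on {0..T2}" by (rule integrable_sub[OF int]) simp
    then have "integral {0..T1} a + integral {T1..T2} a = integral {0..T2} a"
      using T by (intro Henstock_Kurzweil_Integration.integral_combine) (auto simp: max_def split: if_splits)
    then have "integral {T1..T2} a = I T2 - I T1" by (simp add: I_def)
    moreover have "dist (I T1) (LINT t:{0..}|lborel. a t) < \<delta> / 2" "dist (I T2) (LINT t:{0..}|lborel. a t) < \<delta> / 2"
      using T N[of T1] N[of T2] by auto
    ultimately show "integral {T1..T2} a < \<delta>" by (simp add: dist_real_def abs_less_iff) (smt (verit))
  qed simp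
qed



lemma arith_aux:
  fixes n x y z e :: real
  assumes "n \<le> 2 * (2 * x + y + 2 * z)" "x \<le> e / 16" "y < e / 8" "z < e / 16" "e > 0"
  shows "n < e"
proof -
  have "n \<le> 4 * x + 2 * y + 4 * z" using assms(1) by (simp add: algebra_simps)
  then show ?thesis using assms(2-5) by linarith
qed

lemma cauchy_conv:
  fixes F :: "real \<Rightarrow> 'a::{complete_space, real_normed_vector}"
  assumes c: "\<And>e. e > 0 \<Longrightarrow> \<exists>N. \<forall>x y. N \<le> x \<longrightarrow> x \<le> y \<longrightarrow> norm (F y - F x) < e"
  shows "\<exists>L. (F \<longlongrightarrow> L) at_top"
proof -
  have cf: "cauchy_filter (filtermap F at_top)"
    unfolding cauchy_filter_metric_filtermap
  proof (intro allI impI)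
    fix e :: real assume e: "e > 0"
    obtain N where N: "\<forall>x y. N \<le> x \<longrightarrow> x \<le> y \<longrightarrow> norm (F y - F x) < e" using c[OF e] by blast
    have dist_ok: "\<forall>x y. N \<le> x \<and> N \<le> y \<longrightarrow> dist (F x) (F y) < e"
    proof (intro allI impI)
      fix x y assume xy: "N \<le> x \<and> N \<le> y"
      have dxy: "dist (F x) (F y) = norm (F y - F x)" by (simp add: dist_norm norm_minus_commute)
      have dyx: "dist (F x) (F y) = norm (F x - F y)" by (rule dist_norm)
      show "dist (F x) (F y) < e"
      proof (cases "x \<le> y")
        case True then show ?thesis using N xy dxy by auto
      next
        case False then show ?thesis using N xy dyx by auto
      qed
    qed
    moreover have "eventually (\<lambda>x. N \<le> x) at_top" by (rule eventually_ge_at_top)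
    ultimately show "\<exists>P. eventually P at_top \<and> (\<forall>x y. P x \<and> P y \<longrightarrow> dist (F x) (F y) < e)"
      by blast
  qed
  have "filtermap F at_top \<le> principal UNIV" by simp
  moreover have "filtermap F at_top \<noteq> bot" by (simp add: filtermap_bot_iff)
  ultimately obtain L where "filtermap F at_top \<le> nhds L"
    using cauchy_filter_complete_converges[OF cf complete_UNIV] by blast
  then have "(F \<longlongrightarrow> L) at_top" by (simp add: filterlim_def)
  then show ?thesis by blast
qed



theorem lemmaA3:
  fixes D :: "'a::{complex_inner, complete_space} set"
    and H :: "'a \<Rightarrow> 'a"
    and U :: "real \<Rightarrow> 'a \<Rightarrow> 'a"
    and u u' :: "real \<Rightarrow> 'a"
    and M M' DM B B1 :: "real \<Rightarrow> 'a \<Rightarrow> 'a"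
    and C :: real
  assumes H_sa: "self_adjoint D H"
    and U_grp: "unitary_group_of D H U"
    and u_bdd: "bounded (u ` {0..})"
    and u_C1: "\<forall>t\<ge>0. (u has_vector_derivative u' t) (at t within {0..})"
    and u'_cont: "continuous_on {0..} u'"
    and u_dom: "\<forall>t\<ge>0. u t \<in> D"
    and u_C0_dom: "continuous_on {0..} u" "continuous_on {0..} (\<lambda>t. H (u t))"
    and M_bdd: "\<forall>t\<ge>0. cbounded_linear (M t)"
    and M'_bdd: "\<forall>t\<ge>0. cbounded_linear (M' t)"
    and M_deriv: "\<forall>t\<ge>0. \<forall>x. ((\<lambda>s. M s x) has_vector_derivative M' t x) (at t within {0..})"
    and DM_bdd: "\<forall>t\<ge>0. cbounded_linear (DM t)"
    and DM_heis: "\<forall>t\<ge>0. \<forall>\<phi>\<in>D. \<forall>\<psi>\<in>D.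
        cinner \<phi> (DM t \<psi>) = cinner \<phi> (M' t \<psi>)
          + cinner (H \<phi>) (\<i> *\<^sub>C M t \<psi>) - cinner \<phi> (\<i> *\<^sub>C M t (H \<psi>))"
    and hyp_i: "set_integrable lborel {0..} (\<lambda>t. norm (M t (u' t + \<i> *\<^sub>C H (u t))))"
    and B_bdd: "\<forall>t\<ge>0. cbounded_linear (B t) \<and> cbounded_linear (B1 t)"
    and hyp_ii: "\<forall>t\<ge>0. \<forall>u1. cmod (cinner u1 (DM t (u t))) \<le> norm (B1 t u1) * norm (B t (u t))"
    and hyp_iii_a: "set_integrable lborel {0..} (\<lambda>t. (norm (B t (u t)))\<^sup>2)"
    and hyp_iii_b: "\<forall>u1. set_integrable lborel {0..} (\<lambda>t. (norm (B1 t (U t u1)))\<^sup>2) \<and>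
        (LINT t:{0..}|lborel. (norm (B1 t (U t u1)))\<^sup>2) \<le> C * (norm u1)\<^sup>2"
  shows "\<exists>L. ((\<lambda>t. U (- t) (M t (u t))) \<longlongrightarrow> L) at_top"
proof -
  note UG = U_grp[unfolded unitary_group_of_def]
  have Ulin: "bounded_linear (U t)" for t
    using UG cbounded_linear_bounded_linear by blast
  have Uinner: "cinner (U t x) (U t y) = cinner x y" for t x y
    using UG by blast
  have U0: "U 0 = id" using UG by blast
  have Uadd: "U (s + t) = U s \<circ> U t" for s t using UG by blast
  have Udom: "x \<in> D \<longleftrightarrow> (\<exists>y. ((\<lambda>t. U t x) has_vector_derivative y) (at 0))" for x
    using UG by blast
  have Uder: "((\<lambda>t. U t x) has_vector_derivative (- \<i>) *\<^sub>C H x) (at 0)" if "x \<in> D" for x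
    using UG that by blast
  have dense: "closure D = UNIV" using H_sa unfolding self_adjoint_def by blast
  have Unorm: "norm (U t x) = norm x" for t x
    by (metis norm_eq_sqrt_cinner Uinner)
  have Uinv: "U t (U (- t) x) = x" for t x
    using Uadd[of t "- t"] U0 by (metis comp_apply id_apply add.right_inverse)
  have Uadj: "cinner (U t p) y = cinner p (U (- t) y)" for t p y
    by (metis Uinner Uinv)
  have UD: "U t x \<in> D" if "x \<in> D" for t x
  proof -
    have "(\<lambda>s. U s (U t x)) = (\<lambda>s. U t (U s x))"
      by (rule ext) (metis Uadd comp_apply add.commute)
    moreover have "((\<lambda>s. U t (U s x)) has_vector_derivative U t ((- \<i>) *\<^sub>C H x)) (at 0)"
      by (rule bounded_linear.has_vector_derivative[OF Ulin Uder[OF that]])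
    ultimately show ?thesis using Udom by metis
  qed
  have Uderiv: "((\<lambda>s. U s x) has_vector_derivative (- \<i>) *\<^sub>C H (U t x)) (at t)" if "x \<in> D" for t x
  proof -
    have eq: "(\<lambda>s. U s x) = (\<lambda>h. U h (U t x)) \<circ> (\<lambda>s. s - t)"
      by (rule ext) (metis Uadd comp_apply diff_add_cancel)
    have d1: "((\<lambda>s. s - t) has_vector_derivative 1) (at t)"
      unfolding has_real_derivative_iff_has_vector_derivative[symmetric]
      by (auto intro!: derivative_eq_intros)
    have d2: "((\<lambda>h. U h (U t x)) has_vector_derivative (- \<i>) *\<^sub>C H (U t x)) (at ((\<lambda>s. s - t) t))"
      using Uder[OF UD[OF that]] by simp
    show ?thesis using vector_diff_chain_at[OF d1 d2] eq by simp
  qed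
  define r where "r t = u' t + \<i> *\<^sub>C H (u t)" for t
  define F where "F t = U (- t) (M t (u t))" for t
  define b where "b t = (norm (B t (u t)))\<^sup>2" for t
  define q where "q t = norm (M t (r t))" for t
  have b_int: "set_integrable lborel {0..} b" using hyp_iii_a unfolding b_def by simp
  have q_int: "set_integrable lborel {0..} q" using hyp_i unfolding q_def r_def by simp
  have b_nn: "\<forall>t. 0 \<le> b t" unfolding b_def by simp
  have q_nn: "\<forall>t. 0 \<le> q t" unfolding q_def by simp

  have key: "norm (F T2 - F T1) \<le> 2 * (2 * lam * \<bar>C\<bar> + integral {T1..T2} b / (2 * lam) + 2 * integral {T1..T2} q)"
    if T: "0 \<le> T1" "T1 \<le> T2" and lam: "lam > 0" for T1 T2 lam
  proof (rule dense_bound[OF dense], intro ballI impI)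
    fix \<phi> assume \<phi>: "\<phi> \<in> D" "norm \<phi> \<le> 2"
    define k where "k t = (norm (B1 t (U t \<phi>)))\<^sup>2" for t
    have k_int: "set_integrable lborel {0..} k" using hyp_iii_b unfolding k_def by simp
    have k_le: "(LINT t:{0..}|lborel. k t) \<le> C * (norm \<phi>)\<^sup>2" using hyp_iii_b unfolding k_def by simp
    have k_nn: "\<forall>t. 0 \<le> k t" unfolding k_def by simp
    define f where "f t = cinner (U t \<phi>) (M t (u t))" for t
    define g where "g t = cinner (U t \<phi>) (DM t (u t)) + cinner (U t \<phi>) (M t (r t))" for t
    have pw: "\<exists>c. \<forall>s\<in>{0..T2+1}. norm (M s x) \<le> c" for x
    proof -
      have "continuous_on {0..T2+1} (\<lambda>s. M s x)"
        unfolding continuous_on_eq_continuous_within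
      proof
        fix s assume s: "s \<in> {0..T2+1}"
        have "continuous (at s within {0..}) (\<lambda>s. M s x)"
          using M_deriv s by (intro has_vector_derivative_continuous) auto
        then show "continuous (at s within {0..T2+1}) (\<lambda>s. M s x)"
          by (rule continuous_within_subset) auto
      qed
      then have "compact ((\<lambda>s. M s x) ` {0..T2+1})" by (rule compact_continuous_image) simp
      then obtain c where "\<forall>y\<in>(\<lambda>s. M s x) ` {0..T2+1}. norm y \<le> c"
        using compact_imp_bounded bounded_iff by metis
      then show ?thesis by auto
    qed
    have "\<exists>K. \<forall>s\<in>{0..T2+1}. \<forall>x. norm (M s x) \<le> K * norm x"
      by (rule uniform_boundedness) (use M_bdd pw in \<open>auto simp: cbounded_linear_bounded_linear\<close>)
    then obtain K where K: "\<forall>s\<in>{0..T2+1}. \<forall>x. norm (M s x) \<le> K * norm x" by blast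
    have fd: "(f has_vector_derivative g t) (at t within {T1..T2})" if t: "t \<in> {T1..T2}" for t
    proof -
      have t0: "t \<ge> 0" using t T by auto
      have S: "{T1..T2} \<subseteq> {0..T2+1}" using T by auto
      have md: "((\<lambda>s. M s (u s)) has_vector_derivative (M t (u' t) + M' t (u t))) (at t within {0..T2+1})"
      proof (rule deriv_apply)
        show "\<forall>s\<in>{0..T2+1}. \<forall>x. norm (M s x) \<le> K * norm x" by (rule K)
        show "\<forall>s\<in>{0..T2+1}. bounded_linear (M s)" using M_bdd by (auto simp: cbounded_linear_bounded_linear)
        show "((\<lambda>s. M s x) has_vector_derivative M' t x) (at t within {0..T2+1})" for x
        proof -
          have "((\<lambda>s. M s x) has_vector_derivative M' t x) (at t within {0..})" using M_deriv t0 by blast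
          then show ?thesis by (rule has_vector_derivative_within_subset) auto
        qed
        have "(u has_vector_derivative u' t) (at t within {0..})" using u_C1 t0 by blast
        then show "(u has_vector_derivative u' t) (at t within {0..T2+1})"
          by (rule has_vector_derivative_within_subset) auto
      qed
      then have md': "((\<lambda>s. M s (u s)) has_vector_derivative (M t (u' t) + M' t (u t))) (at t within {T1..T2})"
        by (rule has_vector_derivative_within_subset[OF _ S])
      have vd: "((\<lambda>s. U s \<phi>) has_vector_derivative (- \<i>) *\<^sub>C H (U t \<phi>)) (at t within {T1..T2})"
        using Uderiv[OF \<phi>(1)] by (rule has_vector_derivative_at_within)
      have "(f has_vector_derivative (cinner (U t \<phi>) (M t (u' t) + M' t (u t)) + cinner ((- \<i>) *\<^sub>C H (U t \<phi>)) (M t (u t)))) (at t within {T1..T2})"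
        unfolding f_def by (rule bounded_bilinear.has_vector_derivative[OF bounded_bilinear_cinner vd md'])
      moreover have "cinner (U t \<phi>) (M t (u' t) + M' t (u t)) + cinner ((- \<i>) *\<^sub>C H (U t \<phi>)) (M t (u t)) = g t"
      proof -
        have Mlin: "M t (u' t + \<i> *\<^sub>C H (u t)) = M t (u' t) + \<i> *\<^sub>C M t (H (u t))"
          using M_bdd t0 unfolding cbounded_linear_def by auto
        have heis: "cinner (U t \<phi>) (DM t (u t)) = cinner (U t \<phi>) (M' t (u t))
          + cinner (H (U t \<phi>)) (\<i> *\<^sub>C M t (u t)) - cinner (U t \<phi>) (\<i> *\<^sub>C M t (H (u t)))"
          using DM_heis t0 UD[OF \<phi>(1)] u_dom by blast
        show ?thesis unfolding g_def r_def Mlin heis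
          by (simp add: cinner_add_right cinner_diff_right cinner_scaleC_left cinner_scaleC_right algebra_simps)
      qed
      ultimately show ?thesis by simp
    qed
    have gI: "(g has_integral (f T2 - f T1)) {T1..T2}"
      by (rule fundamental_theorem_of_calculus[OF T(2) fd])
    have fdiff: "f T2 - f T1 = cinner \<phi> (F T2 - F T1)"
      unfolding f_def F_def by (simp add: Uadj cinner_diff_right)
    define h where "h t = k t * (lam / 2) + b t * (1 / (2 * lam)) + q t * norm \<phi>" for t
    have gh: "norm (g t) \<le> h t" if "t \<in> {T1..T2}" for t
    proof -
      have t0: "t \<ge> 0" using that T by auto
      have 1: "cmod (cinner (U t \<phi>) (DM t (u t))) \<le> norm (B1 t (U t \<phi>)) * norm (B t (u t))"
        using hyp_ii t0 by blast
      have 2: "norm (B1 t (U t \<phi>)) * norm (B t (u t)) \<le> k t * (lam / 2) + b t * (1 / (2 * lam))"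
      proof -
        define x where "x = norm (B1 t (U t \<phi>))"
        define y where "y = norm (B t (u t))"
        have "k t * (lam / 2) + b t * (1 / (2 * lam)) - x * y = (lam * x - y)\<^sup>2 / (2 * lam)"
          using lam unfolding k_def b_def x_def[symmetric] y_def[symmetric]
          by (simp add: field_simps power2_eq_square)
        moreover have "(lam * x - y)\<^sup>2 / (2 * lam) \<ge> 0" using lam by simp
        ultimately show ?thesis unfolding x_def y_def by linarith
      qed
      have 3: "cmod (cinner (U t \<phi>) (M t (r t))) \<le> q t * norm \<phi>"
        using cinner_cauchy_schwarz[of "U t \<phi>" "M t (r t)"] unfolding q_def Unorm by (simp add: mult.commute)
      show ?thesis unfolding g_def h_def
        using 1 2 3 norm_triangle_ineq[of "cinner (U t \<phi>) (DM t (u t))" "cinner (U t \<phi>) (M t (r t))"]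
        by linarith
    qed
    have ki: "k integrable_on {T1..T2}" by (rule integrable_sub[OF k_int T(1)])
    have bi: "b integrable_on {T1..T2}" by (rule integrable_sub[OF b_int T(1)])
    have qi: "q integrable_on {T1..T2}" by (rule integrable_sub[OF q_int T(1)])
    have hi: "h integrable_on {T1..T2}"
      unfolding h_def by (intro integrable_add integrable_on_mult_left ki bi qi)
    have gi: "g integrable_on {T1..T2}" using gI by blast
    have "cmod (f T2 - f T1) \<le> integral {T1..T2} h"
      using Henstock_Kurzweil_Integration.integral_norm_bound_integral[OF gi hi gh]
        integral_unique[OF gI] by simp
    also have "integral {T1..T2} h = integral {T1..T2} k * (lam / 2) + integral {T1..T2} b * (1 / (2 * lam))
        + integral {T1..T2} q * norm \<phi>"
    proof -
      have i1: "(\<lambda>t. k t * (lam / 2)) integrable_on {T1..T2}" by (rule integrable_on_mult_left[OF ki])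
      have i2: "(\<lambda>t. b t * (1 / (2 * lam))) integrable_on {T1..T2}" by (rule integrable_on_mult_left[OF bi])
      have i3: "(\<lambda>t. q t * norm \<phi>) integrable_on {T1..T2}" by (rule integrable_on_mult_left[OF qi])
      have "integral {T1..T2} h = integral {T1..T2} (\<lambda>t. k t * (lam / 2) + b t * (1 / (2 * lam)))
          + integral {T1..T2} (\<lambda>t. q t * norm \<phi>)"
        unfolding h_def by (rule integral_add[OF integrable_add[OF i1 i2] i3])
      also have "\<dots> = integral {T1..T2} (\<lambda>t. k t * (lam / 2)) + integral {T1..T2} (\<lambda>t. b t * (1 / (2 * lam)))
          + integral {T1..T2} (\<lambda>t. q t * norm \<phi>)"
        by (simp only: integral_add[OF i1 i2])
      finally show ?thesis by (simp only: integral_mult_left)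
    qed
    also have "\<dots> \<le> 2 * lam * \<bar>C\<bar> + integral {T1..T2} b / (2 * lam) + 2 * integral {T1..T2} q"
    proof -
      have "integral {T1..T2} k \<le> (LINT t:{0..}|lborel. k t)"
        by (rule integral_sub_le[OF k_int T(1)]) (simp add: k_nn)
      also have "\<dots> \<le> C * (norm \<phi>)\<^sup>2" by (rule k_le)
      also have "\<dots> \<le> \<bar>C\<bar> * 4"
      proof -
        have "(norm \<phi>)\<^sup>2 \<le> 2\<^sup>2" using \<phi>(2) by (intro power_mono) auto
        then have "\<bar>C\<bar> * (norm \<phi>)\<^sup>2 \<le> \<bar>C\<bar> * 4" by (intro mult_left_mono) auto
        moreover have "C * (norm \<phi>)\<^sup>2 \<le> \<bar>C\<bar> * (norm \<phi>)\<^sup>2" by (intro mult_right_mono) auto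
        ultimately show ?thesis by linarith
      qed
      finally have "integral {T1..T2} k * (lam / 2) \<le> (\<bar>C\<bar> * 4) * (lam / 2)"
        by (rule mult_right_mono) (use lam in simp)
      then have A: "integral {T1..T2} k * (lam / 2) \<le> 2 * lam * \<bar>C\<bar>" by simp
      have "0 \<le> integral {T1..T2} q" using qi q_nn by (intro integral_nonneg) auto
      then have "integral {T1..T2} q * norm \<phi> \<le> integral {T1..T2} q * 2"
        using mult_left_mono[OF \<phi>(2)] by simp
      then have Q: "integral {T1..T2} q * norm \<phi> \<le> 2 * integral {T1..T2} q" by linarith
      have B: "integral {T1..T2} b * (1 / (2 * lam)) = integral {T1..T2} b / (2 * lam)" by simp
      show ?thesis using A Q B by linarith
    qed
    finally show "cmod (cinner \<phi> (F T2 - F T1)) \<le> 2 * lam * \<bar>C\<bar> + integral {T1..T2} b / (2 * lam) + 2 * integral {T1..T2} q"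
      using fdiff by simp
  qed

  have "\<exists>L. (F \<longlongrightarrow> L) at_top"
  proof (rule cauchy_conv)
    fix e :: real assume e: "e > 0"
    define lam where "lam = e / (16 * (\<bar>C\<bar> + 1))"
    have lam: "lam > 0" using e by (simp add: lam_def add_pos_nonneg)
    have lamC: "lam * \<bar>C\<bar> \<le> e / 16"
    proof -
      have "lam * \<bar>C\<bar> = (e / 16) * (\<bar>C\<bar> / (\<bar>C\<bar> + 1))" by (simp add: lam_def field_simps)
      also have "\<dots> \<le> (e / 16) * 1" using e by (intro mult_left_mono) auto
      finally show ?thesis by simp
    qed
    obtain N1 where N1: "N1 \<ge> 0" "\<forall>T1 T2. N1 \<le> T1 \<longrightarrow> T1 \<le> T2 \<longrightarrow> integral {T1..T2} b < e * lam / 4"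
      using tail_small[OF b_int, of "e * lam / 4"] e lam by auto
    obtain N2 where N2: "N2 \<ge> 0" "\<forall>T1 T2. N2 \<le> T1 \<longrightarrow> T1 \<le> T2 \<longrightarrow> integral {T1..T2} q < e / 16"
      using tail_small[OF q_int, of "e / 16"] e by auto
    have main: "norm (F T2 - F T1) < e" if "max N1 N2 \<le> T1" "T1 \<le> T2" for T1 T2
    proof -
      have Ib: "integral {T1..T2} b < e * lam / 4" using N1 that by auto
      have Iq: "integral {T1..T2} q < e / 16" using N2 that by auto
      have Ib': "integral {T1..T2} b / (2 * lam) < e / 8"
        using Ib lam by (simp add: field_simps)
      have "norm (F T2 - F T1) \<le> 2 * (2 * lam * \<bar>C\<bar> + integral {T1..T2} b / (2 * lam) + 2 * integral {T1..T2} q)"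
        using key[of T1 T2 lam] that lam N1(1) by auto
      then have "norm (F T2 - F T1) \<le> 2 * (2 * (lam * \<bar>C\<bar>) + integral {T1..T2} b / (2 * lam) + 2 * integral {T1..T2} q)"
        by (simp only: mult.assoc)
      then show ?thesis by (rule arith_aux[OF _ lamC Ib' Iq e])
    qed
    show "\<exists>N. \<forall>x y. N \<le> x \<longrightarrow> x \<le> y \<longrightarrow> norm (F y - F x) < e"
      using main by blast
  qed
  moreover have "F = (\<lambda>t. U (- t) (M t (u t)))" by (rule ext) (simp add: F_def)
  ultimately show ?thesis by simp
qed

end
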